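(* Let $X=X(\Delta)$ be a smooth complete toric variety. If $\mathcal{I}_1\ne\mathcal{I}_2$ are two centred primitive collections of $\Delta$, then $\mathcal{I}_1\cap\mathcal{I}_2=\varnothing$.
   Context: Rays of $\Delta$ are identified with their primitive generators. A primitive collection is a set $\mathcal{I}$ of rays whose members do not generate a cone of $\Delta$ while the members of each proper subset do; it is centred if $\sum_{\rho\in\mathcal{I}}\rho=0$. *)

theory Defs
  imports "HOL-Analysis.Analysis"
begin

text \<open>The lattice N = Z^n inside N_R = R^n, with n = CARD('n).\<close>
definition lattice_vec :: "real^'n \<Rightarrow> bool" where
  "lattice_vec v \<longleftrightarrow> (\<forall>i. v $ i \<in> \<int>)"

definition lattice_basis :: "(real^'n) set \<Rightarrow> bool" where
  "lattice_basis B \<longleftrightarrow> finite B \<and> (\<forall>b\<in>B. lattice_vec b) \<and> independent B \<and>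
     (\<forall>v. lattice_vec v \<longrightarrow> (\<exists>c. (\<forall>b\<in>B. c b \<in> \<int>) \<and> v = (\<Sum>b\<in>B. c b *\<^sub>R b)))"

definition pos_hull :: "(real^'n) set \<Rightarrow> (real^'n) set" where
  "pos_hull S = {\<Sum>v\<in>S. c v *\<^sub>R v | c. \<forall>v\<in>S. c v \<ge> 0}"

text \<open>A smooth fan is encoded by the set of its cones, each cone being recorded by
  its set of ray generators (primitive lattice vectors).  Fan axioms: finitely many cones,
  closed under faces (for simplicial cones, faces = subsets of generators), two cones
  meet in a common face.\<close>
definition smooth_complete_fan :: "(real^'n) set set \<Rightarrow> bool" where
  "smooth_complete_fan \<Delta> \<longleftrightarrow>
     finite \<Delta> \<and>
     (\<forall>\<sigma>\<in>\<Delta>. \<exists>B. lattice_basis B \<and> \<sigma> \<subseteq> B) \<and>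
     (\<forall>\<sigma>\<in>\<Delta>. \<forall>\<tau>. \<tau> \<subseteq> \<sigma> \<longrightarrow> \<tau> \<in> \<Delta>) \<and>
     (\<forall>\<sigma>\<in>\<Delta>. \<forall>\<tau>\<in>\<Delta>. pos_hull \<sigma> \<inter> pos_hull \<tau> = pos_hull (\<sigma> \<inter> \<tau>)) \<and>
     (\<Union>\<sigma>\<in>\<Delta>. pos_hull \<sigma>) = UNIV"

text \<open>Rays of the fan, identified with their primitive generators.\<close>
definition fan_rays :: "(real^'n) set set \<Rightarrow> (real^'n) set" where
  "fan_rays \<Delta> = {v. {v} \<in> \<Delta>}"

definition generates_cone :: "(real^'n) set set \<Rightarrow> (real^'n) set \<Rightarrow> bool" where
  "generates_cone \<Delta> I \<longleftrightarrow> (\<exists>\<sigma>\<in>\<Delta>. pos_hull I = pos_hull \<sigma>)"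

definition primitive_collection :: "(real^'n) set set \<Rightarrow> (real^'n) set \<Rightarrow> bool" where
  "primitive_collection \<Delta> I \<longleftrightarrow> I \<subseteq> fan_rays \<Delta> \<and> \<not> generates_cone \<Delta> I \<and>
     (\<forall>J. J \<subset> I \<longrightarrow> generates_cone \<Delta> J)"

definition centred :: "(real^'n) set \<Rightarrow> bool" where
  "centred I \<longleftrightarrow> (\<Sum>\<rho>\<in>I. \<rho>) = 0"

end

theory Submission
  imports Defs
begin

lemma coeff_unique:
  fixes S :: "(real^'n) set"
  assumes "finite S" "independent S"
    and "(\<Sum>v\<in>S. a v *\<^sub>R v) = (\<Sum>v\<in>S. b v *\<^sub>R v)" "x \<in> S"
  shows "a x = b x"
proof (rule ccontr)
  assume ne: "a x \<noteq> b x"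
  have h1: "(\<Sum>v\<in>S. (a v - b v) *\<^sub>R v) = 0"
    using assms(3) by (simp add: scaleR_diff_left sum_subtractf)
  have h2: "\<exists>v\<in>S. a v - b v \<noteq> 0" using ne assms(4) by auto
  have "\<exists>u. (\<exists>v\<in>S. u v \<noteq> 0) \<and> (\<Sum>v\<in>S. u v *\<^sub>R v) = 0"
    by (rule exI[of _ "\<lambda>v. a v - b v"]) (use h1 h2 in simp)
  then have "dependent S"
    using real_vector.dependent_finite[OF assms(1)] by simp
  then show False using assms(2) by simp
qed

lemma sum_extend:
  fixes f :: "real^'n \<Rightarrow> real"
  assumes "finite S" "T \<subseteq> S"
  shows "(\<Sum>v\<in>T. f v *\<^sub>R v) = (\<Sum>v\<in>S. (if v \<in> T then f v else 0) *\<^sub>R v)"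
proof -
  have "(\<Sum>v\<in>S. (if v \<in> T then f v else 0) *\<^sub>R v) = (\<Sum>v\<in>S. if v \<in> T then f v *\<^sub>R v else 0)"
    by (rule sum.cong) auto
  also have "\<dots> = (\<Sum>v\<in>S \<inter> T. f v *\<^sub>R v)"
    using assms(1) by (simp add: sum.inter_restrict)
  also have "S \<inter> T = T" using assms(2) by blast
  finally show ?thesis by simp
qed

lemma sum_id_extend:
  fixes T :: "(real^'n) set"
  assumes "finite S" "T \<subseteq> S"
  shows "(\<Sum>v\<in>T. v) = (\<Sum>v\<in>S. (if v \<in> T then 1 else 0) *\<^sub>R v)"
  using sum_extend[OF assms, of "\<lambda>_. 1"] by simp

lemma pos_hullI:
  fixes S :: "(real^'n) set"
  assumes "\<And>v. v \<in> S \<Longrightarrow> c v \<ge> 0" "x = (\<Sum>v\<in>S. c v *\<^sub>R v)"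
  shows "x \<in> pos_hull S"
  unfolding pos_hull_def using assms by blast

lemma in_pos_hull:
  fixes A :: "(real^'n) set"
  assumes "finite A" "v \<in> A"
  shows "v \<in> pos_hull A"
proof -
  have "v = (\<Sum>w\<in>{v}. (\<lambda>_. 1::real) w *\<^sub>R w)" by simp
  also have "\<dots> = (\<Sum>w\<in>A. (if w \<in> {v} then 1 else 0) *\<^sub>R w)"
    using sum_extend[OF assms(1), of "{v}" "\<lambda>_. 1"] assms(2) by simp
  finally show ?thesis by (rule pos_hullI[rotated]) simp
qed

lemma pos_hull_empty: "pos_hull ({} :: (real^'n) set) = {0}"
  unfolding pos_hull_def by auto

lemma fan_finite: "smooth_complete_fan \<Delta> \<Longrightarrow> finite \<Delta>"
  by (drule iffD1[OF smooth_complete_fan_def]) (erule conjunct1)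

lemma fan_basis: "smooth_complete_fan \<Delta> \<Longrightarrow> \<sigma> \<in> \<Delta> \<Longrightarrow> \<exists>B. lattice_basis B \<and> \<sigma> \<subseteq> B"
  using iffD1[OF smooth_complete_fan_def, THEN conjunct2, THEN conjunct1] by blast

lemma fan_inter: "smooth_complete_fan \<Delta> \<Longrightarrow> \<sigma> \<in> \<Delta> \<Longrightarrow> \<tau> \<in> \<Delta> \<Longrightarrow>
   pos_hull \<sigma> \<inter> pos_hull \<tau> = pos_hull (\<sigma> \<inter> \<tau>)"
  using iffD1[OF smooth_complete_fan_def, THEN conjunct2, THEN conjunct2, THEN conjunct2, THEN conjunct1] by blast

lemma ray_in_cone:
  fixes \<Delta> :: "(real^'n) set set"
  assumes F: "smooth_complete_fan \<Delta>" and v: "v \<in> fan_rays \<Delta>" and s: "\<sigma> \<in> \<Delta>"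
    and vin: "v \<in> pos_hull \<sigma>"
  shows "v \<in> \<sigma>"
proof (rule ccontr)
  assume nv: "v \<notin> \<sigma>"
  have vD: "{v} \<in> \<Delta>" using v unfolding fan_rays_def by simp
  have "pos_hull {v} \<inter> pos_hull \<sigma> = pos_hull ({v} \<inter> \<sigma>)"
    using fan_inter[OF F vD s] .
  moreover have "{v} \<inter> \<sigma> = {}" using nv by blast
  moreover have "v \<in> pos_hull {v}" by (rule in_pos_hull) auto
  ultimately have v0: "v = 0" using vin pos_hull_empty by auto
  obtain B where LB: "lattice_basis B" and vB: "{v} \<subseteq> B"
    using fan_basis[OF F vD] by blast
  have "0 \<in> B" using v0 vB by simp
  moreover have "independent B" using LB unfolding lattice_basis_def by simp
  ultimately show False using real_vector.dependent_zero by blast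
qed

lemma cone_of_subset:
  fixes \<Delta> :: "(real^'n) set set"
  assumes F: "smooth_complete_fan \<Delta>" and A: "A \<subseteq> fan_rays \<Delta>" "finite A"
    and g: "generates_cone \<Delta> A"
  obtains \<sigma> B where "\<sigma> \<in> \<Delta>" "A \<subseteq> \<sigma>" "lattice_basis B" "\<sigma> \<subseteq> B"
proof -
  obtain \<sigma> where s: "\<sigma> \<in> \<Delta>" "pos_hull A = pos_hull \<sigma>"
    using g unfolding generates_cone_def by blast
  have As: "A \<subseteq> \<sigma>"
  proof
    fix v assume "v \<in> A"
    then have "v \<in> pos_hull \<sigma>" using in_pos_hull[OF A(2)] s by blast
    then show "v \<in> \<sigma>" using ray_in_cone[OF F _ s(1)] A \<open>v \<in> A\<close> by blast
  qed
  obtain B where "lattice_basis B" "\<sigma> \<subseteq> B"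
    using fan_basis[OF F s(1)] by blast
  then show ?thesis using that[OF s(1) As] by blast
qed

theorem lemma6p4:
  fixes \<Delta> :: "(real^'n) set set" and I1 I2 :: "(real^'n) set"
  assumes "smooth_complete_fan \<Delta>"
    and "primitive_collection \<Delta> I1" and "centred I1"
    and "primitive_collection \<Delta> I2" and "centred I2"
    and "I1 \<noteq> I2"
  shows "I1 \<inter> I2 = {}"
proof (rule ccontr)
  assume "I1 \<inter> I2 \<noteq> {}"
  then obtain \<rho> where r1: "\<rho> \<in> I1" and r2: "\<rho> \<in> I2" by blast
  note F = assms(1)
  have finD: "finite \<Delta>" using fan_finite[OF F] .
  have "\<forall>\<sigma>\<in>\<Delta>. finite \<sigma>"
  proof
    fix \<sigma> assume "\<sigma> \<in> \<Delta>"
    then obtain B where "lattice_basis B" "\<sigma> \<subseteq> B" using fan_basis[OF F] by blast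
    then show "finite \<sigma>" unfolding lattice_basis_def using finite_subset by blast
  qed
  then have "finite (\<Union>\<Delta>)" using finD by blast
  moreover have "fan_rays \<Delta> \<subseteq> \<Union>\<Delta>" unfolding fan_rays_def by blast
  ultimately have finR: "finite (fan_rays \<Delta>)" using finite_subset by blast
  have I1R: "I1 \<subseteq> fan_rays \<Delta>" and I2R: "I2 \<subseteq> fan_rays \<Delta>"
    using assms(2,4) unfolding primitive_collection_def by auto
  then have fin1: "finite I1" and fin2: "finite I2" using finR finite_subset by auto
  define A where "A = I1 - {\<rho>}"
  define B where "B = I2 - {\<rho>}"
  have gA: "generates_cone \<Delta> A"
    using assms(2) r1 unfolding primitive_collection_def A_def by blast
  have gB: "generates_cone \<Delta> B"
    using assms(4) r2 unfolding primitive_collection_def B_def by blast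
  have finA: "finite A" and finB: "finite B" using fin1 fin2 A_def B_def by auto
  obtain \<sigma>A BA where sA: "\<sigma>A \<in> \<Delta>" "A \<subseteq> \<sigma>A" "lattice_basis BA" "\<sigma>A \<subseteq> BA"
    using cone_of_subset[OF F _ finA gA] I1R A_def by blast
  obtain \<sigma>B BB where sB: "\<sigma>B \<in> \<Delta>" "B \<subseteq> \<sigma>B" "lattice_basis BB" "\<sigma>B \<subseteq> BB"
    using cone_of_subset[OF F _ finB gB] I2R B_def by blast
  have finsA: "finite \<sigma>A"
    using sA unfolding lattice_basis_def by (meson finite_subset)
  have indA: "independent \<sigma>A"
    using sA unfolding lattice_basis_def by (meson real_vector.independent_mono)
  have finsB: "finite \<sigma>B"
    using sB unfolding lattice_basis_def by (meson finite_subset)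
  have indB: "independent \<sigma>B"
    using sB unfolding lattice_basis_def by (meson real_vector.independent_mono)
  have sumA: "(\<Sum>v\<in>A. v) = - \<rho>"
  proof -
    have "(\<Sum>v\<in>I1. v) = \<rho> + (\<Sum>v\<in>A. v)"
      unfolding A_def using fin1 r1 by (simp add: sum.remove)
    then show ?thesis using assms(3) unfolding centred_def by (simp add: eq_neg_iff_add_eq_0 add.commute)
  qed
  have sumB: "(\<Sum>v\<in>B. v) = - \<rho>"
  proof -
    have "(\<Sum>v\<in>I2. v) = \<rho> + (\<Sum>v\<in>B. v)"
      unfolding B_def using fin2 r2 by (simp add: sum.remove)
    then show ?thesis using assms(5) unfolding centred_def by (simp add: eq_neg_iff_add_eq_0 add.commute)
  qed
  have "- \<rho> \<in> pos_hull \<sigma>A"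
  proof -
    have "- \<rho> = (\<Sum>v\<in>\<sigma>A. (if v \<in> A then 1 else 0) *\<^sub>R v)"
      using sumA sum_id_extend[OF finsA sA(2)] by simp
    then show ?thesis by (rule pos_hullI[rotated]) simp
  qed
  moreover have "- \<rho> \<in> pos_hull \<sigma>B"
  proof -
    have "- \<rho> = (\<Sum>v\<in>\<sigma>B. (if v \<in> B then 1 else 0) *\<^sub>R v)"
      using sumB sum_id_extend[OF finsB sB(2)] by simp
    then show ?thesis by (rule pos_hullI[rotated]) simp
  qed
  ultimately have "- \<rho> \<in> pos_hull (\<sigma>A \<inter> \<sigma>B)"
    using fan_inter[OF F sA(1) sB(1)] by blast
  then obtain c where c: "- \<rho> = (\<Sum>v\<in>\<sigma>A \<inter> \<sigma>B. c v *\<^sub>R v)"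
    unfolding pos_hull_def by blast
  define C where "C = \<sigma>A \<inter> \<sigma>B"
  have eA: "(\<Sum>v\<in>\<sigma>A. (if v \<in> A then 1 else 0) *\<^sub>R v) = (\<Sum>v\<in>\<sigma>A. (if v \<in> C then c v else 0) *\<^sub>R v)"
    using sumA sum_id_extend[OF finsA sA(2)] sum_extend[OF finsA, of C c] c C_def by auto
  have eB: "(\<Sum>v\<in>\<sigma>B. (if v \<in> B then 1 else 0) *\<^sub>R v) = (\<Sum>v\<in>\<sigma>B. (if v \<in> C then c v else 0) *\<^sub>R v)"
    using sumB sum_id_extend[OF finsB sB(2)] sum_extend[OF finsB, of C c] c C_def by auto
  have "A = B"
  proof (intro set_eqI iffI)
    fix v assume "v \<in> A"
    then have "v \<in> \<sigma>A" using sA by blast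
    from coeff_unique[OF finsA indA eA this] \<open>v \<in> A\<close> have vC: "v \<in> C" and "c v = 1"
      by (auto split: if_splits)
    then have "v \<in> \<sigma>B" unfolding C_def by blast
    from coeff_unique[OF finsB indB eB this] vC \<open>c v = 1\<close> show "v \<in> B"
      by (auto split: if_splits)
  next
    fix v assume "v \<in> B"
    then have "v \<in> \<sigma>B" using sB by blast
    from coeff_unique[OF finsB indB eB this] \<open>v \<in> B\<close> have vC: "v \<in> C" and "c v = 1"
      by (auto split: if_splits)
    then have "v \<in> \<sigma>A" unfolding C_def by blast
    from coeff_unique[OF finsA indA eA this] vC \<open>c v = 1\<close> show "v \<in> A"
      by (auto split: if_splits)
  qed
  then have "I1 = I2" using r1 r2 A_def B_def by blast
  then show False using assms(6) by blast
qed

end
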